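(* Let $\eta>0$ and $(u,v)\in\mathring C$ be such that $u/v$ is at distance at least $\eta$ from each $\mu_i$, $1\le i\le n$. Then for every $x\in\mathbb X_{u,v}$ and every $z\in\mathbb R^N$ with $\langle z,x\rangle=0=\langle z,x\rangle_{-1}$, $$\sum_{J\in\mathcal J}\frac1{|x|^4}\langle T_J(x),z\rangle^2+\sum_{i=1}^n\frac1{|x|^2}\langle R_i(x),z\rangle^2\ge c_1(\eta)|z|^2,$$ where $c_1(\eta)>0$ depends only on $\eta$, $N$ and $(\lambda_\ell)$.
   Context: Let $n\ge4$, $N=2n$, $1=\lambda_1=\lambda_2<\lambda_3=\lambda_4<\dots<\lambda_{N-1}=\lambda_N$, $\mu_i=\lambda_{2i}$. $\langle x,y\rangle=\sum x_\ell y_\ell$, $|x|^2=\sum x_\ell^2$, $\langle x,y\rangle_{-1}=\sum x_\ell y_\ell/\lambda_\ell$, $|x|_{-1}^2=\sum x_\ell^2/\lambda_\ell$. $C=\{(u,v):0\le v\le u\le\lambda_Nv\}$, interior $\mathring C$; $\mathbb X_{u,v}=\{x:|x|^2=u,|x|_{-1}^2=v\}$. $\mathcal J$ is the set of triples $J=(k,\ell,m)$ in $\{1,\dots,N\}$ with $\lambda_k<\lambda_\ell<\lambda_m$, and $T_J(x)$ is the vector $\sum x_ax_b(1/\lambda_a-1/\lambda_b)e_c$, the sum over the three cyclic permutations $(a,b,c)$ of $J$ ($e_c$ the canonical basis); $R_i(x)=x_{2i}e_{2i-1}-x_{2i-1}e_{2i}$, $1\le i\le n$. *)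

theory Defs
  imports "HOL-Analysis.Analysis"
begin

text \<open>Vectors of R^N are represented as functions nat => real; only the
coordinates 1..N matter.\<close>

definition ip :: "nat \<Rightarrow> (nat \<Rightarrow> real) \<Rightarrow> (nat \<Rightarrow> real) \<Rightarrow> real" where
  "ip N x y = (\<Sum>l\<in>{1..N}. x l * y l)"

definition ipm :: "(nat \<Rightarrow> real) \<Rightarrow> nat \<Rightarrow> (nat \<Rightarrow> real) \<Rightarrow> (nat \<Rightarrow> real) \<Rightarrow> real" where
  "ipm lam N x y = (\<Sum>l\<in>{1..N}. x l * y l / lam l)"

definition sqn :: "nat \<Rightarrow> (nat \<Rightarrow> real) \<Rightarrow> real" where
  "sqn N x = (\<Sum>l\<in>{1..N}. (x l)^2)"

definition sqnm :: "(nat \<Rightarrow> real) \<Rightarrow> nat \<Rightarrow> (nat \<Rightarrow> real) \<Rightarrow> real" where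
  "sqnm lam N x = (\<Sum>l\<in>{1..N}. (x l)^2 / lam l)"

definition coneC :: "(nat \<Rightarrow> real) \<Rightarrow> nat \<Rightarrow> (real \<times> real) set" where
  "coneC lam N = {(u, v). 0 \<le> v \<and> v \<le> u \<and> u \<le> lam N * v}"

definition XX :: "(nat \<Rightarrow> real) \<Rightarrow> nat \<Rightarrow> real \<Rightarrow> real \<Rightarrow> (nat \<Rightarrow> real) set" where
  "XX lam N u v = {x. sqn N x = u \<and> sqnm lam N x = v}"

definition JJ :: "(nat \<Rightarrow> real) \<Rightarrow> nat \<Rightarrow> (nat \<times> nat \<times> nat) set" where
  "JJ lam N = {(k, l, m). k \<in> {1..N} \<and> l \<in> {1..N} \<and> m \<in> {1..N} \<and>
                          lam k < lam l \<and> lam l < lam m}"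

definition ebasis :: "nat \<Rightarrow> nat \<Rightarrow> real" where
  "ebasis c = (\<lambda>j. if j = c then 1 else 0)"

definition cyc :: "nat \<times> nat \<times> nat \<Rightarrow> (nat \<times> nat \<times> nat) list" where
  "cyc J = (case J of (k, l, m) \<Rightarrow> [(k, l, m), (l, m, k), (m, k, l)])"

definition TJ :: "(nat \<Rightarrow> real) \<Rightarrow> nat \<times> nat \<times> nat \<Rightarrow> (nat \<Rightarrow> real) \<Rightarrow> nat \<Rightarrow> real" where
  "TJ lam J x = (\<lambda>j. sum_list (map (\<lambda>(a, b, c). x a * x b * (1 / lam a - 1 / lam b) * ebasis c j) (cyc J)))"

definition Ri :: "nat \<Rightarrow> (nat \<Rightarrow> real) \<Rightarrow> nat \<Rightarrow> real" where
  "Ri i x = (\<lambda>j. x (2*i) * ebasis (2*i - 1) j - x (2*i - 1) * ebasis (2*i) j)"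

end

theory Submission imports Defs begin

definition Ef :: "(nat \<Rightarrow> real) \<Rightarrow> nat \<times> nat \<times> nat \<Rightarrow> (nat \<Rightarrow> real) \<Rightarrow> (nat \<Rightarrow> real) \<Rightarrow> real" where
  "Ef lam J x z = (case J of (k, l, m) \<Rightarrow>
     x k * x l * (1 / lam k - 1 / lam l) * z m + x l * x m * (1 / lam l - 1 / lam m) * z k
     + x m * x k * (1 / lam m - 1 / lam k) * z l)"

definition Rf :: "nat \<Rightarrow> (nat \<Rightarrow> real) \<Rightarrow> (nat \<Rightarrow> real) \<Rightarrow> real" where
  "Rf i x z = x (2*i) * z (2*i - 1) - x (2*i - 1) * z (2*i)"

lemma Ef_cyc: "Ef lam (b, c, a) x z = Ef lam (a, b, c) x z"
  unfolding Ef_def by (simp add: algebra_simps)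

lemma Ef_swap: "Ef lam (b, a, c) x z = - Ef lam (a, b, c) x z"
  unfolding Ef_def by (simp add: algebra_simps)

lemma ip_TJ:
  assumes "k \<in> {1..N}" "l \<in> {1..N}" "m \<in> {1..N}"
  shows "ip N (TJ lam (k, l, m) x) z = Ef lam (k, l, m) x z"
proof -
  let ?A = "x k * x l * (1 / lam k - 1 / lam l)"
  let ?B = "x l * x m * (1 / lam l - 1 / lam m)"
  let ?C = "x m * x k * (1 / lam m - 1 / lam k)"
  have "ip N (TJ lam (k, l, m) x) z = (\<Sum>j\<in>{1..N}. (if j = m then ?A * z j else 0)
     + (if j = k then ?B * z j else 0) + (if j = l then ?C * z j else 0))"
    unfolding ip_def TJ_def cyc_def ebasis_def by (intro sum.cong) (auto simp: distrib_right)
  also have "\<dots> = ?A * z m + ?B * z k + ?C * z l"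
    using assms by (simp add: sum.distrib)
  finally show ?thesis by (simp add: Ef_def)
qed

lemma ip_Ri:
  assumes "i \<in> {1..n}"
  shows "ip (2*n) (Ri i x) z = Rf i x z"
proof -
  have "ip (2*n) (Ri i x) z = (\<Sum>j\<in>{1..2*n}. (if j = 2*i - 1 then x (2*i) * z j else 0)
     - (if j = 2*i then x (2*i - 1) * z j else 0))"
    unfolding ip_def Ri_def ebasis_def by (intro sum.cong) (auto simp: algebra_simps)
  also have "\<dots> = Rf i x z"
    using assms by (auto simp add: sum_subtractf Rf_def sum.delta[of "{1..2*n}" "2*i-1" "\<lambda>j. x (2*i) * z j"]
      sum.delta[of "{1..2*n}" "2*i" "\<lambda>j. x (2*i-1) * z j"] del: One_nat_def)
  finally show ?thesis .
qed



lemma cpt: "compact (Pi\<^sub>E UNIV (S::nat \<Rightarrow> real set))" if "\<And>i. compact (S i)"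
proof -
  have "compactin (product_topology (\<lambda>i. euclidean) UNIV) (Pi\<^sub>E UNIV S)"
    using that by (simp add: compactin_PiE)
  then show ?thesis by (simp add: euclidean_product_topology)
qed

lemma cfst [continuous_intros]: "continuous_on A (\<lambda>p::(nat\<Rightarrow>real)\<times>(nat\<Rightarrow>real). fst p k)"
proof -
  have "continuous_on A (\<lambda>p::(nat\<Rightarrow>real)\<times>(nat\<Rightarrow>real). fst p)" by (intro continuous_intros)
  then show ?thesis by (rule continuous_on_compose2[OF continuous_on_product_coordinates]) auto
qed
lemma csnd [continuous_intros]: "continuous_on A (\<lambda>p::(nat\<Rightarrow>real)\<times>(nat\<Rightarrow>real). snd p k)"
proof -
  have "continuous_on A (\<lambda>p::(nat\<Rightarrow>real)\<times>(nat\<Rightarrow>real). snd p)" by (intro continuous_intros)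
  then show ?thesis by (rule continuous_on_compose2[OF continuous_on_product_coordinates]) auto
qed

definition Bx :: "nat \<Rightarrow> (nat \<Rightarrow> real) set" where
  "Bx N = Pi\<^sub>E UNIV (\<lambda>l. if l \<in> {1..N} then {-1..1} else {0})"

lemma compact_Bx: "compact (Bx N)"
  unfolding Bx_def by (rule cpt) auto

definition Gf :: "(nat \<Rightarrow> real) \<Rightarrow> nat \<Rightarrow> (nat \<Rightarrow> real) \<times> (nat \<Rightarrow> real) \<Rightarrow> real" where
  "Gf lam n p = (\<Sum>J\<in>JJ lam (2*n). (Ef lam J (fst p) (snd p))^2) + (\<Sum>i=1..n. (Rf i (fst p) (snd p))^2)"

definition Sset :: "(nat \<Rightarrow> real) \<Rightarrow> nat \<Rightarrow> real \<Rightarrow> ((nat \<Rightarrow> real) \<times> (nat \<Rightarrow> real)) set" where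
  "Sset lam n \<eta> = (Bx (2*n) \<times> Bx (2*n)) \<inter> {p. sqn (2*n) (fst p) = 1 \<and> sqn (2*n) (snd p) = 1 \<and>
     (\<forall>i\<in>{1..n}. \<eta> * sqnm lam (2*n) (fst p) \<le> \<bar>sqn (2*n) (fst p) - lam (2*i) * sqnm lam (2*n) (fst p)\<bar>)
     \<and> ip (2*n) (snd p) (fst p) = 0 \<and> ipm lam (2*n) (snd p) (fst p) = 0}"

lemma cont_Ef [continuous_intros]: "continuous_on A (\<lambda>p. Ef lam J (fst p) (snd p))"
  by (cases J) (auto simp: Ef_def intro!: continuous_intros)

lemma cont_Rf [continuous_intros]: "continuous_on A (\<lambda>p. Rf i (fst p) (snd p))"
  unfolding Rf_def by (intro continuous_intros)

lemma cont_Gf: "continuous_on A (Gf lam n)"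
  unfolding Gf_def by (intro continuous_intros)

lemma closed_Ball_aux: "(\<And>i. i \<in> A \<Longrightarrow> closed {x. P i x}) \<Longrightarrow> closed {x. \<forall>i\<in>A. P i x}"
proof -
  assume h: "\<And>i. i \<in> A \<Longrightarrow> closed {x. P i x}"
  have "{x. \<forall>i\<in>A. P i x} = (\<Inter>i\<in>A. {x. P i x})" by auto
  then show ?thesis using h by (simp add: closed_INT)
qed

lemma compact_Sset: "compact (Sset lam n \<eta>)"
  unfolding Sset_def
proof (rule compact_Int_closed)
  show "compact (Bx (2*n) \<times> Bx (2*n))" by (intro compact_Times compact_Bx)
  have c1: "continuous_on UNIV (\<lambda>p::(nat\<Rightarrow>real)\<times>(nat\<Rightarrow>real). sqn (2*n) (fst p))"
    unfolding sqn_def by (intro continuous_intros)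
  have c2: "continuous_on UNIV (\<lambda>p::(nat\<Rightarrow>real)\<times>(nat\<Rightarrow>real). sqn (2*n) (snd p))"
    unfolding sqn_def by (intro continuous_intros)
  have c3: "continuous_on UNIV (\<lambda>p::(nat\<Rightarrow>real)\<times>(nat\<Rightarrow>real). sqnm lam (2*n) (fst p))"
    unfolding sqnm_def divide_inverse by (intro continuous_intros)
  have c4: "continuous_on UNIV (\<lambda>p::(nat\<Rightarrow>real)\<times>(nat\<Rightarrow>real). ip (2*n) (snd p) (fst p))"
    unfolding ip_def by (intro continuous_intros)
  have c5: "continuous_on UNIV (\<lambda>p::(nat\<Rightarrow>real)\<times>(nat\<Rightarrow>real). ipm lam (2*n) (snd p) (fst p))"
    unfolding ipm_def divide_inverse by (intro continuous_intros)
  show "closed {p::(nat\<Rightarrow>real)\<times>(nat\<Rightarrow>real). sqn (2*n) (fst p) = 1 \<and> sqn (2*n) (snd p) = 1 \<and>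
     (\<forall>i\<in>{1..n}. \<eta> * sqnm lam (2*n) (fst p) \<le> \<bar>sqn (2*n) (fst p) - lam (2*i) * sqnm lam (2*n) (fst p)\<bar>)
     \<and> ip (2*n) (snd p) (fst p) = 0 \<and> ipm lam (2*n) (snd p) (fst p) = 0}"
    by (intro closed_Collect_conj closed_Collect_eq closed_Ball_aux closed_Collect_le
        c1 c2 c3 c4 c5 continuous_intros)
qed

lemma finite_JJ: "finite (JJ lam N)"
proof -
  have "JJ lam N \<subseteq> {1..N} \<times> {1..N} \<times> {1..N}" by (auto simp: JJ_def)
  then show ?thesis by (rule finite_subset) auto
qed

definition rs :: "nat \<Rightarrow> real \<Rightarrow> (nat \<Rightarrow> real) \<Rightarrow> nat \<Rightarrow> real" where
  "rs N s y = (\<lambda>l. if l \<in> {1..N} then y l / s else 0)"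

lemma sqn_rs: "sqn N (rs N s y) = sqn N y / s^2"
  unfolding sqn_def rs_def sum_divide_distrib by (rule sum.cong) (auto simp: power_divide)

lemma sqnm_rs: "sqnm lam N (rs N s y) = sqnm lam N y / s^2"
  unfolding sqnm_def rs_def sum_divide_distrib by (rule sum.cong) (auto simp: power_divide)

lemma ip_rs: "ip N (rs N t w) (rs N s y) = ip N w y / (t * s)"
  unfolding ip_def rs_def sum_divide_distrib by (rule sum.cong) auto

lemma ipm_rs: "ipm lam N (rs N t w) (rs N s y) = ipm lam N w y / (t * s)"
  unfolding ipm_def rs_def sum_divide_distrib by (rule sum.cong) auto

lemma Ef_rs:
  assumes "J \<in> JJ lam N"
  shows "Ef lam J (rs N s x) (rs N t z) = Ef lam J x z / (s^2 * t)"
  using assms by (cases J) (auto simp: JJ_def Ef_def rs_def power2_eq_square add_divide_distrib diff_divide_distrib mult_ac)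

lemma Rf_rs:
  assumes "i \<in> {1..n}"
  shows "Rf i (rs (2*n) s x) (rs (2*n) t z) = Rf i x z / (s * t)"
  using assms by (auto simp: Rf_def rs_def diff_divide_distrib)

lemma rs_Bx:
  assumes "sqn N (rs N s y) = 1"
  shows "rs N s y \<in> Bx N"
proof -
  have bnd: "\<bar>rs N s y l\<bar> \<le> 1" if l: "l \<in> {1..N}" for l
  proof -
    have "(rs N s y l)^2 \<le> sqn N (rs N s y)"
      unfolding sqn_def by (rule member_le_sum) (use l in auto)
    then show ?thesis using assms abs_square_le_1 by metis
  qed
  then have "rs N s y l \<in> (if l \<in> {1..N} then {-1..1} else {0})" for l
  proof (cases "l \<in> {1..N}")
    case True
    have "\<bar>rs N s y l\<bar> \<le> 1" using True bnd by blast
    then have "rs N s y l \<in> {-1..1}" by (auto simp: abs_le_iff)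
    then show ?thesis using True by simp
  next
    case False
    then have "rs N s y l = 0" unfolding rs_def by (simp only: if_False)
    then show ?thesis using False by simp
  qed
  then show ?thesis unfolding Bx_def by (auto simp: PiE_iff)
qed

context
  fixes n :: nat and lam :: "nat \<Rightarrow> real"
  assumes lam1: "lam 1 = 1"
    and pairs: "\<forall>i\<in>{1..n}. lam (2*i - 1) = lam (2*i)"
    and incr: "\<forall>i\<in>{1..<n}. lam (2*i) < lam (2*i + 1)"
begin

lemma mu_step: "1 \<le> i \<Longrightarrow> i < n \<Longrightarrow> lam (2*i) < lam (2*(i+1))"
proof -
  assume h: "1 \<le> i" "i < n"
  then have "lam (2*i) < lam (2*i+1)" using incr by auto
  moreover have "i+1 \<in> {1..n}" using h by simp
  then have "lam (2*(i+1) - 1) = lam (2*(i+1))" using pairs by blast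
  moreover have "2*(i+1) - 1 = 2*i+1" by simp
  ultimately show ?thesis by metis
qed

lemma mu_mono: "1 \<le> i \<Longrightarrow> i < j \<Longrightarrow> j \<le> n \<Longrightarrow> lam (2*i) < lam (2*j)"
proof (induction j)
  case 0 then show ?case by simp
next
  case (Suc j)
  show ?case
  proof (cases "i = j")
    case True then show ?thesis using mu_step Suc.prems by simp
  next
    case False
    then have "i < j" using Suc.prems by simp
    then have "lam (2*i) < lam (2*j)" using Suc.IH Suc.prems by simp
    also have "\<dots> < lam (2*(j+1))" using mu_step \<open>i<j\<close> Suc.prems by simp
    finally show ?thesis by simp
  qed
qed

lemma lev_range: "a \<in> {1..2*n} \<Longrightarrow> (a+1) div 2 \<in> {1..n}"
  by auto

lemma lev_shape: "a \<in> {1..2*n} \<Longrightarrow> a = 2*((a+1) div 2) \<or> a = 2*((a+1) div 2) - 1"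
  by (cases "even a") (auto elim!: evenE oddE)

lemma lam_lev:
  assumes a: "a \<in> {1..2*n}"
  shows "lam a = lam (2*((a+1) div 2))"
proof -
  obtain i where i: "i = (a+1) div 2" by blast
  have ir: "i \<in> {1..n}" using lev_range[OF a] i by simp
  have "a = 2*i \<or> a = 2*i - 1" using lev_shape[OF a] i by simp
  then have "lam a = lam (2*i)"
  proof
    assume "a = 2*i - 1" then show ?thesis using pairs ir by simp
  qed simp
  then show ?thesis using i by simp
qed

lemma lam_eq_iff:
  assumes "a \<in> {1..2*n}" "b \<in> {1..2*n}"
  shows "lam a = lam b \<longleftrightarrow> (a+1) div 2 = (b+1) div 2"
proof
  assume "(a+1) div 2 = (b+1) div 2"
  then show "lam a = lam b" using lam_lev[OF assms(1)] lam_lev[OF assms(2)] by simp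
next
  assume e: "lam a = lam b"
  show "(a+1) div 2 = (b+1) div 2"
  proof (rule ccontr)
    assume "(a+1) div 2 \<noteq> (b+1) div 2"
    then consider "(a+1) div 2 < (b+1) div 2" | "(b+1) div 2 < (a+1) div 2" by linarith
    then show False
    proof cases
      case 1
      then have "lam (2*((a+1) div 2)) < lam (2*((b+1) div 2))"
        using mu_mono lev_range assms by (meson atLeastAtMost_iff)
      then show False using e lam_lev[OF assms(1)] lam_lev[OF assms(2)] by simp
    next
      case 2
      then have "lam (2*((b+1) div 2)) < lam (2*((a+1) div 2))"
        using mu_mono lev_range assms by (meson atLeastAtMost_iff)
      then show False using e lam_lev[OF assms(1)] lam_lev[OF assms(2)] by simp
    qed
  qed
qed

lemma lam_ge1:
  assumes a: "a \<in> {1..2*n}"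
  shows "lam a \<ge> 1"
proof -
  obtain i where ii: "i = (a+1) div 2" by blast
  have i: "i \<in> {1..n}" using lev_range[OF a] ii by simp
  have la: "lam a = lam (2*i)" using lam_lev[OF a] ii by simp
  have "1 \<in> {1..n}" using i by auto
  then have "lam (2*1-1) = lam (2*1)" using pairs by blast
  then have l2: "lam (2*1) = 1" using lam1 by simp
  show ?thesis
  proof (cases "i = 1")
    case True then show ?thesis using la l2 by simp
  next
    case False
    then have "1 < i" using i by simp
    then have "lam (2*1) < lam (2*i)" using mu_mono[of 1 i] i by simp
    then show ?thesis using la l2 by simp
  qed
qed

lemma lam_pos: "a \<in> {1..2*n} \<Longrightarrow> lam a > 0"
  using lam_ge1 by fastforce

lemma partner:
  assumes "a \<in> {1..2*n}" "c \<in> {1..2*n}" "lam a = lam c"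
    and HR: "\<forall>i\<in>{1..n}. Rf i x z = 0"
  shows "x a * z c = x c * z a"
proof -
  obtain i where ii: "i = (a+1) div 2" by blast
  have eq: "(c+1) div 2 = i" using lam_eq_iff[OF assms(1,2)] assms(3) ii by simp
  have i: "i \<in> {1..n}" using lev_range assms ii by blast
  have R: "x (2*i) * z (2*i - 1) = x (2*i - 1) * z (2*i)" using HR i by (simp add: Rf_def)
  have "a = 2*i \<or> a = 2*i - 1" using lev_shape assms ii by blast
  moreover have "c = 2*i \<or> c = 2*i - 1" using lev_shape[of c] assms eq by simp
  ultimately show ?thesis using R by (auto simp: algebra_simps)
qed

lemma E3:
  assumes "a \<in> {1..N}" "b \<in> {1..N}" "c \<in> {1..N}"
    and "lam a \<noteq> lam b" "lam b \<noteq> lam c" "lam a \<noteq> lam c"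
    and HT: "\<forall>J\<in>JJ lam N. Ef lam J x z = 0"
  shows "Ef lam (a, b, c) x z = 0"
proof -
  have m: "\<And>k l m. {k,l,m} \<subseteq> {1..N} \<Longrightarrow> lam k < lam l \<Longrightarrow> lam l < lam m \<Longrightarrow> Ef lam (k,l,m) x z = 0"
    using HT by (auto simp: JJ_def)
  have s: "{a,b,c} \<subseteq> {1..N}" "{a,c,b} \<subseteq> {1..N}" "{b,a,c} \<subseteq> {1..N}" "{b,c,a} \<subseteq> {1..N}"
     "{c,a,b} \<subseteq> {1..N}" "{c,b,a} \<subseteq> {1..N}" using assms by auto
  have c1: "Ef lam (b, c, a) x z = Ef lam (a, b, c) x z" "Ef lam (c, a, b) x z = Ef lam (a, b, c) x z"
    by (simp_all add: Ef_cyc)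
  have c2: "Ef lam (b, a, c) x z = - Ef lam (a, b, c) x z" "Ef lam (a, c, b) x z = - Ef lam (a, b, c) x z"
     "Ef lam (c, b, a) x z = - Ef lam (a, b, c) x z"
    by (metis Ef_swap Ef_cyc)+
  consider "lam a < lam b" "lam b < lam c" | "lam a < lam c" "lam c < lam b" | "lam b < lam a" "lam a < lam c"
    | "lam b < lam c" "lam c < lam a" | "lam c < lam a" "lam a < lam b" | "lam c < lam b" "lam b < lam a"
    using assms(4-6) by linarith
  then show ?thesis
    by cases (use m[OF s(1)] m[OF s(2)] m[OF s(3)] m[OF s(4)] m[OF s(5)] m[OF s(6)] c1 c2 in auto)
qed


lemma kernel:
  assumes ab: "a0 \<in> {1..2*n}" "b0 \<in> {1..2*n}" "lam a0 \<noteq> lam b0" "x a0 \<noteq> 0" "x b0 \<noteq> 0"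
    and HT: "\<forall>J\<in>JJ lam (2*n). Ef lam J x z = 0"
    and HR: "\<forall>i\<in>{1..n}. Rf i x z = 0"
    and o1: "ip (2*n) z x = 0" and o2: "ipm lam (2*n) z x = 0"
  shows "sqn (2*n) z = 0"
proof -
  define ta where "ta = z a0 / x a0"
  define tb where "tb = z b0 / x b0"
  define sa where "sa = 1 / lam a0"
  define sb where "sb = 1 / lam b0"
  define \<beta> where "\<beta> = (ta - tb) / (sa - sb)"
  define \<alpha> where "\<alpha> = ta - \<beta> * sa"
  have la: "lam a0 > 0" "lam b0 > 0" using lam_pos ab by auto
  have sab: "sa - sb \<noteq> 0" using ab(3) la by (auto simp: sa_def sb_def)
  have za: "z a0 = ta * x a0" using ab(4) by (simp add: ta_def)
  have zb: "z b0 = tb * x b0" using ab(5) by (simp add: tb_def)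
  have aa: "\<alpha> + \<beta> * sa = ta" by (simp add: \<alpha>_def)
  have hb: "\<beta> * (sa - sb) = ta - tb" using sab by (simp add: \<beta>_def)
  then have hb': "\<beta> * sa - \<beta> * sb = ta - tb" by (simp add: right_diff_distrib)
  have bb: "\<alpha> + \<beta> * sb = tb" using hb' by (simp add: \<alpha>_def)
  have key: "z c = (\<alpha> + \<beta> / lam c) * x c" if c: "c \<in> {1..2*n}" for c
  proof -
    consider "lam c = lam a0" | "lam c = lam b0" | "lam c \<noteq> lam a0" "lam c \<noteq> lam b0" by blast
    then show ?thesis
    proof cases
      case 1
      have "x a0 * z c = x c * z a0" using partner[OF ab(1) c] 1 HR by simp
      then have "x a0 * z c = x a0 * (ta * x c)" using za by (simp add: algebra_simps)
      then have "z c = ta * x c" using ab(4) by simp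
      moreover have "\<beta> / lam c = \<beta> * sa" by (simp add: sa_def 1)
      ultimately show ?thesis using aa by simp
    next
      case 2
      have "x b0 * z c = x c * z b0" using partner[OF ab(2) c] 2 HR by simp
      then have "x b0 * z c = x b0 * (tb * x c)" using zb by (simp add: algebra_simps)
      then have "z c = tb * x c" using ab(5) by simp
      moreover have "\<beta> / lam c = \<beta> * sb" by (simp add: sb_def 2)
      ultimately show ?thesis using bb by simp
    next
      case 3
      have E: "Ef lam (a0, b0, c) x z = 0"
        using E3[OF ab(1) ab(2) c ab(3) _ _ HT] 3 by auto
      define sc where "sc = 1 / lam c"
      have "Ef lam (a0, b0, c) x z = x a0 * x b0 * ((sa - sb) * z c + x c * ((sb - sc) * ta + (sc - sa) * tb))"
        unfolding Ef_def prod.case sa_def[symmetric] sb_def[symmetric] sc_def[symmetric] za zb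
        by (simp add: algebra_simps)
      then have "(sa - sb) * z c + x c * ((sb - sc) * ta + (sc - sa) * tb) = 0"
        using E ab(4,5) by simp
      then have zc: "(sa - sb) * z c = - x c * ((sb - sc) * ta + (sc - sa) * tb)"
        by (simp add: algebra_simps)
      have h1: "(sa - sb) * (\<alpha> + \<beta> * sc) = (sa - sb)*ta + (\<beta>*(sa - sb))*(sc - sa)"
        by (simp add: \<alpha>_def algebra_simps)
      then have h2: "(sa - sb) * (\<alpha> + \<beta> * sc) = - ((sb - sc) * ta + (sc - sa) * tb)"
        unfolding hb by (simp add: algebra_simps)
      have "(sa - sb) * z c = (sa - sb) * ((\<alpha> + \<beta> * sc) * x c)"
        unfolding zc mult.assoc[symmetric] h2 by (simp add: algebra_simps)
      then have "z c = (\<alpha> + \<beta> * sc) * x c" using sab by simp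
      moreover have "\<beta> / lam c = \<beta> * sc" by (simp add: sc_def)
      ultimately show ?thesis by simp
    qed
  qed
  have "sqn (2*n) z = (\<Sum>c\<in>{1..2*n}. z c * ((\<alpha> + \<beta> / lam c) * x c))"
    unfolding sqn_def by (rule sum.cong) (use key in \<open>auto simp: power2_eq_square\<close>)
  also have "\<dots> = (\<Sum>c\<in>{1..2*n}. \<alpha> * (z c * x c) + \<beta> * (z c * x c / lam c))"
    by (rule sum.cong) (auto simp: algebra_simps)
  also have "\<dots> = \<alpha> * ip (2*n) z x + \<beta> * ipm lam (2*n) z x"
    unfolding ip_def ipm_def by (simp add: sum.distrib sum_distrib_left)
  finally show ?thesis using o1 o2 by simp
qed

lemma two_levels:
  assumes u: "sqn (2*n) x > 0" and eta: "\<eta> > 0"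
    and R: "\<forall>i\<in>{1..n}. \<eta> * sqnm lam (2*n) x \<le> \<bar>sqn (2*n) x - lam (2*i) * sqnm lam (2*n) x\<bar>"
  shows "\<exists>a0 b0. a0 \<in> {1..2*n} \<and> b0 \<in> {1..2*n} \<and> lam a0 \<noteq> lam b0 \<and> x a0 \<noteq> 0 \<and> x b0 \<noteq> 0"
proof (rule ccontr)
  assume H: "\<not> ?thesis"
  have "\<exists>a\<in>{1..2*n}. x a \<noteq> 0"
  proof (rule ccontr)
    assume "\<not> (\<exists>a\<in>{1..2*n}. x a \<noteq> 0)"
    then have "sqn (2*n) x = 0" by (simp add: sqn_def)
    with u show False by simp
  qed
  then obtain a where a: "a \<in> {1..2*n}" "x a \<noteq> 0" by blast
  have all: "\<forall>b\<in>{1..2*n}. x b \<noteq> 0 \<longrightarrow> lam b = lam a" using H a by blast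
  have v: "sqnm lam (2*n) x = sqn (2*n) x / lam a"
    unfolding sqnm_def sqn_def sum_divide_distrib by (rule sum.cong) (use all in auto)
  obtain i where ii: "i = (a+1) div 2" by blast
  have i: "i \<in> {1..n}" using lev_range[OF a(1)] ii by simp
  have lai: "lam (2*i) = lam a" using lam_lev[OF a(1)] ii by simp
  have pa: "lam a > 0" using lam_pos a by auto
  have "\<eta> * sqnm lam (2*n) x \<le> \<bar>sqn (2*n) x - lam (2*i) * sqnm lam (2*n) x\<bar>" using R i by blast
  also have "\<dots> = 0" using lai v pa by simp
  finally have "\<eta> * (sqn (2*n) x / lam a) \<le> 0" using v by simp
  moreover have "\<eta> * (sqn (2*n) x / lam a) > 0" using eta u pa by simp
  ultimately show False by simp
qed

lemma Gf_pos:
  assumes eta: "\<eta> > 0" and p: "p \<in> Sset lam n \<eta>"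
  shows "Gf lam n p > 0"
proof (rule ccontr)
  obtain x z where pxz: "p = (x, z)" by (cases p)
  assume "\<not> Gf lam n p > 0"
  moreover have "Gf lam n p \<ge> 0" unfolding Gf_def by (intro add_nonneg_nonneg sum_nonneg) auto
  ultimately have "Gf lam n p = 0" by simp
  moreover have s1: "(\<Sum>J\<in>JJ lam (2*n). (Ef lam J x z)^2) \<ge> 0" by (intro sum_nonneg) auto
  moreover have s2: "(\<Sum>i=1..n. (Rf i x z)^2) \<ge> 0" by (intro sum_nonneg) auto
  ultimately have z1: "(\<Sum>J\<in>JJ lam (2*n). (Ef lam J x z)^2) = 0" and z2: "(\<Sum>i=1..n. (Rf i x z)^2) = 0"
    unfolding Gf_def pxz by simp_all
  have HT: "\<forall>J\<in>JJ lam (2*n). Ef lam J x z = 0"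
    using z1 sum_nonneg_eq_0_iff[OF finite_JJ[of lam "2*n"], where f="\<lambda>J. (Ef lam J x z)^2"] by simp
  have HR: "\<forall>i\<in>{1..n}. Rf i x z = 0"
    using z2 sum_nonneg_eq_0_iff[of "{1..n}" "\<lambda>i. (Rf i x z)^2"] by simp
  have S: "sqn (2*n) x = 1" "sqn (2*n) z = 1"
    "\<forall>i\<in>{1..n}. \<eta> * sqnm lam (2*n) x \<le> \<bar>sqn (2*n) x - lam (2*i) * sqnm lam (2*n) x\<bar>"
    "ip (2*n) z x = 0" "ipm lam (2*n) z x = 0"
    using p unfolding Sset_def pxz by auto
  obtain a0 b0 where ab: "a0 \<in> {1..2*n}" "b0 \<in> {1..2*n}" "lam a0 \<noteq> lam b0" "x a0 \<noteq> 0" "x b0 \<noteq> 0"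
    using two_levels[of x \<eta>] S(1,3) eta by auto
  have "sqn (2*n) z = 0" using kernel[OF ab HT HR S(4,5)] .
  then show False using S(2) by simp
qed
end


theorem propositionA3:
  fixes n :: nat and lam :: "nat \<Rightarrow> real" and \<eta> :: real
  assumes n4: "n \<ge> 4"
    and lam1: "lam 1 = 1"
    and pairs: "\<forall>i\<in>{1..n}. lam (2*i - 1) = lam (2*i)"
    and incr: "\<forall>i\<in>{1..<n}. lam (2*i) < lam (2*i + 1)"
    and eta: "\<eta> > 0"
  shows "\<exists>c>0. \<forall>u v x z.
     (u, v) \<in> interior (coneC lam (2*n)) \<and>
     (\<forall>i\<in>{1..n}. \<bar>u / v - lam (2*i)\<bar> \<ge> \<eta>) \<and>
     x \<in> XX lam (2*n) u v \<and>
     ip (2*n) z x = 0 \<and> ipm lam (2*n) z x = 0 \<longrightarrow>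
     (\<Sum>J\<in>JJ lam (2*n). (ip (2*n) (TJ lam J x) z)^2 / (sqn (2*n) x)^2)
       + (\<Sum>i=1..n. (ip (2*n) (Ri i x) z)^2 / sqn (2*n) x)
       \<ge> c * sqn (2*n) z"
proof -
  let ?N = "2*n"
  obtain c where c0: "c > 0" and cS: "\<forall>p\<in>Sset lam n \<eta>. c \<le> Gf lam n p"
  proof (cases "Sset lam n \<eta> = {}")
    case True then show ?thesis using that[of 1] by simp
  next
    case False
    obtain p0 where p0: "p0 \<in> Sset lam n \<eta>" "\<forall>q\<in>Sset lam n \<eta>. Gf lam n p0 \<le> Gf lam n q"
      using continuous_attains_inf[OF compact_Sset False cont_Gf] by blast
    have "Gf lam n p0 > 0" using Gf_pos[OF lam1 pairs incr eta p0(1)] .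
    then show ?thesis using that p0(2) by blast
  qed
  show ?thesis
  proof (intro exI[of _ c] conjI allI impI)
    show "c > 0" by (rule c0)
    fix u v x z
    assume H: "(u, v) \<in> interior (coneC lam (2*n)) \<and>
     (\<forall>i\<in>{1..n}. \<bar>u / v - lam (2*i)\<bar> \<ge> \<eta>) \<and>
     x \<in> XX lam (2*n) u v \<and>
     ip (2*n) z x = 0 \<and> ipm lam (2*n) z x = 0"
    then have int: "(u, v) \<in> interior (coneC lam (2*n))"
      and rat: "\<forall>i\<in>{1..n}. \<bar>u / v - lam (2*i)\<bar> \<ge> \<eta>"
      and xu: "sqn ?N x = u" and xv: "sqnm lam ?N x = v"
      and o1: "ip ?N z x = 0" and o2: "ipm lam ?N z x = 0"
      by (auto simp: XX_def)
    have cone: "0 \<le> v" "v \<le> u" "u \<le> lam ?N * v"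
      using interior_subset[of "coneC lam ?N"] int by (auto simp: coneC_def)
    have upos: "u > 0"
    proof (rule ccontr)
      assume "\<not> u > 0"
      then have "u = 0" "v = 0" using cone by auto
      then have "(0::real, 0::real) \<in> interior (coneC lam ?N)" using int by simp
      then obtain e where e: "e > 0" "ball (0, 0) e \<subseteq> coneC lam ?N"
        unfolding mem_interior by blast
      have "dist (0::real, 0::real) (- e / 2, 0::real) < e" using e by (simp add: dist_Pair_Pair)
      then have "(- e / 2, 0::real) \<in> ball (0::real, 0::real) e" by (simp only: mem_ball)
      then have "(- e / 2, 0::real) \<in> coneC lam ?N" using e(2) by blast
      then show False using e by (auto simp: coneC_def)
    qed
    have vpos: "v > 0"
    proof (rule ccontr)
      assume "\<not> v > 0"
      then have "v = 0" using cone by auto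
      then show False using cone upos by simp
    qed
    have R': "\<forall>i\<in>{1..n}. \<eta> * v \<le> \<bar>u - lam (2*i) * v\<bar>"
    proof
      fix i assume i: "i \<in> {1..n}"
      have eq: "u - lam (2*i) * v = v * (u / v - lam (2*i))" using vpos by (simp add: field_simps)
      have "\<bar>u - lam (2*i) * v\<bar> = \<bar>v\<bar> * \<bar>u / v - lam (2*i)\<bar>" unfolding eq abs_mult ..
      also have "\<bar>v\<bar> = v" using vpos by simp
      finally have ab: "\<bar>u - lam (2*i) * v\<bar> = v * \<bar>u / v - lam (2*i)\<bar>" .
      have "\<eta> \<le> \<bar>u / v - lam (2*i)\<bar>" using rat i by blast
      then have "\<eta> * v \<le> \<bar>u / v - lam (2*i)\<bar> * v" using vpos by (intro mult_right_mono) auto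
      then show "\<eta> * v \<le> \<bar>u - lam (2*i) * v\<bar>" unfolding ab by (simp only: mult.commute)
    qed
    have LHS: "(\<Sum>J\<in>JJ lam ?N. (ip ?N (TJ lam J x) z)^2 / (sqn ?N x)^2)
       + (\<Sum>i=1..n. (ip ?N (Ri i x) z)^2 / sqn ?N x)
       = (\<Sum>J\<in>JJ lam ?N. (Ef lam J x z)^2 / u^2) + (\<Sum>i=1..n. (Rf i x z)^2 / u)"
    proof -
      have "(\<Sum>J\<in>JJ lam ?N. (ip ?N (TJ lam J x) z)^2 / (sqn ?N x)^2) = (\<Sum>J\<in>JJ lam ?N. (Ef lam J x z)^2 / u^2)"
      proof (rule sum.cong)
        fix J assume "J \<in> JJ lam ?N"
        then obtain k l m where kk: "J = (k, l, m)" "k \<in> {1..?N}" "l \<in> {1..?N}" "m \<in> {1..?N}"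
          by (auto simp: JJ_def)
        have "ip ?N (TJ lam J x) z = Ef lam J x z" unfolding kk(1) by (rule ip_TJ[OF kk(2-4)])
        then show "(ip ?N (TJ lam J x) z)^2 / (sqn ?N x)^2 = (Ef lam J x z)^2 / u^2"
          using xu by simp
      qed simp
      moreover have "(\<Sum>i=1..n. (ip ?N (Ri i x) z)^2 / sqn ?N x) = (\<Sum>i=1..n. (Rf i x z)^2 / u)"
      proof (rule sum.cong)
        fix i assume "i \<in> {1..n}"
        then have "ip ?N (Ri i x) z = Rf i x z" by (rule ip_Ri)
        then show "(ip ?N (Ri i x) z)^2 / sqn ?N x = (Rf i x z)^2 / u" using xu by simp
      qed simp
      ultimately show ?thesis by simp
    qed
    have nn: "0 \<le> (\<Sum>J\<in>JJ lam ?N. (Ef lam J x z)^2 / u^2) + (\<Sum>i=1..n. (Rf i x z)^2 / u)"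
      using upos by (intro add_nonneg_nonneg sum_nonneg) auto
    have zn: "sqn ?N z \<ge> 0" unfolding sqn_def by (intro sum_nonneg) auto
    show "(\<Sum>J\<in>JJ lam ?N. (ip ?N (TJ lam J x) z)^2 / (sqn ?N x)^2)
       + (\<Sum>i=1..n. (ip ?N (Ri i x) z)^2 / sqn ?N x) \<ge> c * sqn ?N z"
    proof (cases "sqn ?N z = 0")
      case True
      then show ?thesis unfolding LHS using nn by simp
    next
      case False
      then have zp: "sqn ?N z > 0" using zn by simp
      define s where "s = sqrt u"
      define t where "t = sqrt (sqn ?N z)"
      have s2: "s^2 = u" using upos by (simp add: s_def)
      have t2: "t^2 = sqn ?N z" using zp by (simp add: t_def)
      have sp: "s > 0" using upos by (simp add: s_def)
      have tp: "t > 0" using zp by (simp add: t_def)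
      define x' where "x' = rs ?N s x"
      define z' where "z' = rs ?N t z"
      have x1: "sqn ?N x' = 1" unfolding x'_def sqn_rs s2 xu using upos by simp
      have z1: "sqn ?N z' = 1" unfolding z'_def sqn_rs t2 using zp by simp
      have xm: "sqnm lam ?N x' = v / u" unfolding x'_def sqnm_rs s2 xv ..
      have o1': "ip ?N z' x' = 0" unfolding x'_def z'_def ip_rs o1 by simp
      have o2': "ipm lam ?N z' x' = 0" unfolding x'_def z'_def ipm_rs o2 by simp
      have R'': "\<forall>i\<in>{1..n}. \<eta> * sqnm lam ?N x' \<le> \<bar>sqn ?N x' - lam (2*i) * sqnm lam ?N x'\<bar>"
      proof
        fix i assume i: "i \<in> {1..n}"
        have "\<eta> * v / u \<le> \<bar>u - lam (2*i) * v\<bar> / u"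
          by (rule divide_right_mono) (use R' i upos in auto)
        also have "\<bar>u - lam (2*i) * v\<bar> / u = \<bar>1 - lam (2*i) * (v / u)\<bar>"
        proof -
          have q: "(u - lam (2*i) * v) / u = 1 - lam (2*i) * (v / u)" using upos by (simp add: field_simps)
          have "\<bar>u - lam (2*i) * v\<bar> / u = \<bar>(u - lam (2*i) * v) / u\<bar>" using upos by (simp add: abs_divide)
          then show ?thesis unfolding q .
        qed
        finally show "\<eta> * sqnm lam ?N x' \<le> \<bar>sqn ?N x' - lam (2*i) * sqnm lam ?N x'\<bar>"
          unfolding x1 xm by simp
      qed
      have bx: "x' \<in> Bx ?N" unfolding x'_def by (rule rs_Bx) (use x1 in \<open>simp only: x'_def\<close>)
      have bz: "z' \<in> Bx ?N" unfolding z'_def by (rule rs_Bx) (use z1 in \<open>simp only: z'_def\<close>)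
      have inS: "(x', z') \<in> Sset lam n \<eta>"
        unfolding Sset_def using bx bz x1 z1 o1' o2' R'' by simp
      have G: "Gf lam n (x', z') = ((\<Sum>J\<in>JJ lam ?N. (Ef lam J x z)^2 / u^2) + (\<Sum>i=1..n. (Rf i x z)^2 / u)) / sqn ?N z"
      proof -
        have e1: "(\<Sum>J\<in>JJ lam ?N. (Ef lam J x' z')^2) = (\<Sum>J\<in>JJ lam ?N. (Ef lam J x z)^2 / u^2 / sqn ?N z)"
        proof (rule sum.cong)
          fix J assume J: "J \<in> JJ lam ?N"
          have "(Ef lam J x' z')^2 = (Ef lam J x z)^2 / ((s^2)^2 * t^2)"
            unfolding x'_def z'_def Ef_rs[OF J] by (simp add: power_divide power_mult_distrib)
          then show "(Ef lam J x' z')^2 = (Ef lam J x z)^2 / u^2 / sqn ?N z"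
            unfolding s2 t2 by simp
        qed simp
        moreover have e2: "(\<Sum>i=1..n. (Rf i x' z')^2) = (\<Sum>i=1..n. (Rf i x z)^2 / u / sqn ?N z)"
        proof (rule sum.cong)
          fix i assume i: "i \<in> {1..n}"
          have "(Rf i x' z')^2 = (Rf i x z)^2 / (s^2 * t^2)"
            unfolding x'_def z'_def Rf_rs[OF i] by (simp add: power_divide power_mult_distrib)
          then show "(Rf i x' z')^2 = (Rf i x z)^2 / u / sqn ?N z"
            unfolding s2 t2 by simp
        qed simp
        have "Gf lam n (x', z') = (\<Sum>J\<in>JJ lam ?N. (Ef lam J x z)^2 / u^2 / sqn ?N z)
            + (\<Sum>i=1..n. (Rf i x z)^2 / u / sqn ?N z)"
          unfolding Gf_def fst_conv snd_conv e1 e2 ..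
        then show ?thesis by (simp only: sum_divide_distrib add_divide_distrib)
      qed
      have "c \<le> Gf lam n (x', z')" using cS inS by blast
      then have "c * sqn ?N z \<le> Gf lam n (x', z') * sqn ?N z" using zn by (simp add: mult_right_mono)
      also have "\<dots> = (\<Sum>J\<in>JJ lam ?N. (Ef lam J x z)^2 / u^2) + (\<Sum>i=1..n. (Rf i x z)^2 / u)"
        unfolding G using zp by simp
      finally show ?thesis unfolding LHS .
    qed
  qed
qed

end
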